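(* Let $I$ be a real closed interval and let $[a,b]$ be a closed subinterval of $I$. A standard function $F\colon I^*\to\mathbb{R}$ satisfies: $F$ is preassociative and unarily quasi-range-idempotent, there exists a continuous and strictly increasing function $f\colon[a,b]\to\mathbb{R}$ such that $F_1(x)=f(\mathrm{med}(a,x,b))$ for all $x\in I$, and $F_2$ is continuous, symmetric, nondecreasing in each argument and satisfies $F_2(x,x)=F_1(x)$ for every $x\in I$, if and only if there exist $c\in[a,b]$ and a continuous and strictly increasing function $f\colon[a,b]\to\mathbb{R}$ such that $$F_n(x_1,\ldots,x_n)=f\Big(\mathrm{med}\Big(a,\,\mathrm{med}\Big(\min_{1\leqslant i\leqslant n} x_i,\,c,\,\max_{1\leqslant i\leqslant n} x_i\Big),\,b\Big)\Big),\qquad n\geqslant 1.$$ In this case $f=F_1|_{[a,b]}$.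
   Context: $I^*=\bigcup_{n\geqslant 0}I^n$ is the set of finite tuples over $I$, $I^0=\{\varepsilon\}$ with $\varepsilon$ the empty tuple; $F(\mathbf{x},\mathbf{y})$ denotes $F$ applied to the concatenation, concatenation with $\varepsilon$ leaving tuples unchanged. $F_n=F|_{I^n}$, $F^{\flat}=F|_{I^*\setminus\{\varepsilon\}}$. $F$ is standard if $F(\mathbf{x})=F(\varepsilon)$ only for $\mathbf{x}=\varepsilon$. $F$ is preassociative if for all tuples $\mathbf{x},\mathbf{y},\mathbf{y}',\mathbf{z}$, $F(\mathbf{y})=F(\mathbf{y}')$ implies $F(\mathbf{x},\mathbf{y},\mathbf{z})=F(\mathbf{x},\mathbf{y}',\mathbf{z})$. $F$ is unarily quasi-range-idempotent if $\mathrm{ran}(F_1)=\mathrm{ran}(F^{\flat})$. $\mathrm{med}(x,y,z)$ denotes the median of three reals. *)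

theory Defs
  imports "HOL-Analysis.Analysis"
begin

text \<open>Tuples over I are lists whose entries lie in I; a function F : I^* -> R is a
  function on real lists, of which only the values on lists I matter.\<close>

definition med :: "real \<Rightarrow> real \<Rightarrow> real \<Rightarrow> real" where
  "med x y z = max (min x y) (min (max x y) z)"

definition standard_on :: "real set \<Rightarrow> (real list \<Rightarrow> real) \<Rightarrow> bool" where
  "standard_on I F \<longleftrightarrow> (\<forall>xs\<in>lists I. F xs = F [] \<longrightarrow> xs = [])"

definition preassociative_on :: "real set \<Rightarrow> (real list \<Rightarrow> real) \<Rightarrow> bool" where
  "preassociative_on I F \<longleftrightarrow>
     (\<forall>x\<in>lists I. \<forall>y\<in>lists I. \<forall>y'\<in>lists I. \<forall>z\<in>lists I.
        F y = F y' \<longrightarrow> F (x @ y @ z) = F (x @ y' @ z))"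

definition unarily_quasi_range_idempotent_on :: "real set \<Rightarrow> (real list \<Rightarrow> real) \<Rightarrow> bool" where
  "unarily_quasi_range_idempotent_on I F \<longleftrightarrow>
     (\<lambda>x. F [x]) ` I = F ` (lists I - {[]})"

end

theory Submission
  imports Defs
begin

lemma L1: fixes a b c m1 M1 m2 M2 :: real
  assumes "a \<le> c" "c \<le> b" "m1 \<le> M1" "m2 \<le> M2"
  shows "med a (med (min m1 m2) c (max M1 M2)) b = med (med a (med m1 c M1) b) c (med a (med m2 c M2) b)"
  using assms unfolding med_def by (simp add: min_def max_def split: if_splits)
lemma mono1: fixes a b c x x' y :: real
  assumes "a \<le> b" "x \<le> x'"
  shows "med a (med (min x y) c (max x y)) b \<le> med a (med (min x' y) c (max x' y)) b"
  using assms unfolding med_def by (simp add: min_def max_def split: if_splits)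
lemma medsym: "med p c (q::real) = med q c p" unfolding med_def by (simp add: min_def max_def split: if_splits)
lemma medxx: "med x c (x::real) = x" unfolding med_def by (simp add: min_def max_def split: if_splits)
lemma medab: "(a::real) \<le> b \<Longrightarrow> med a x b \<in> {a..b}" unfolding med_def by (simp add: min_def max_def split: if_splits)
lemma medab2: "(x::real) \<in> {a..b} \<Longrightarrow> med a x b = x" unfolding med_def by (simp add: min_def max_def split: if_splits)

definition G :: "real \<Rightarrow> real \<Rightarrow> real \<Rightarrow> real list \<Rightarrow> real" where
  "G a b c xs = med a (med (Min (set xs)) c (Max (set xs))) b"

lemma MinMax: "xs \<noteq> [] \<Longrightarrow> Min (set xs) \<le> Max (set (xs::real list))"
  by (metis List.finite_set Max_ge Min_le hd_in_set order_trans)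

lemma G_append: assumes "xs \<noteq> []" "ys \<noteq> []" "a \<le> c" "c \<le> b"
  shows "G a b c (xs @ ys) = med (G a b c xs) c (G a b c ys)"
proof -
  have "Min (set (xs @ ys)) = min (Min (set xs)) (Min (set ys))"
    using assms by (simp add: Min_Un)
  moreover have "Max (set (xs @ ys)) = max (Max (set xs)) (Max (set ys))"
    using assms by (simp add: Max_Un)
  ultimately show ?thesis unfolding G_def
    using L1[OF assms(3,4) MinMax[OF assms(1)] MinMax[OF assms(2)]] by simp
qed

lemma G_range: "(a::real) \<le> b \<Longrightarrow> G a b c xs \<in> {a..b}"
  unfolding G_def by (rule medab)

lemma G_single: "G a b c [x] = med a x b"
  unfolding G_def by (simp add: medxx)

lemma G_pair: "G a b c [x, y] = med a (med (min x y) c (max x y)) b"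
  unfolding G_def by (simp add: min_def max_def)

lemma backward:
  fixes I :: "real set" and a b c :: real and F :: "real list \<Rightarrow> real"
  assumes "a \<le> b" and sub: "{a..b} \<subseteq> I"
    and std: "standard_on I F" and c: "c \<in> {a..b}"
    and fc: "continuous_on {a..b} f" and fm: "strict_mono_on {a..b} f"
    and FF: "\<forall>xs\<in>lists I. xs \<noteq> [] \<longrightarrow> F xs = f (med a (med (Min (set xs)) c (Max (set xs))) b)"
  shows "preassociative_on I F \<and> unarily_quasi_range_idempotent_on I F
          \<and> (\<exists>f. continuous_on {a..b} f \<and> strict_mono_on {a..b} f
                 \<and> (\<forall>x\<in>I. F [x] = f (med a x b)))
          \<and> continuous_on (I \<times> I) (\<lambda>(x, y). F [x, y])
          \<and> (\<forall>x\<in>I. \<forall>y\<in>I. F [x, y] = F [y, x])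
          \<and> (\<forall>x\<in>I. \<forall>x'\<in>I. \<forall>y\<in>I. x \<le> x' \<longrightarrow> F [x, y] \<le> F [x', y] \<and> F [y, x] \<le> F [y, x'])
          \<and> (\<forall>x\<in>I. F [x, x] = F [x])"
proof -
  have ac: "a \<le> c" "c \<le> b" using c by auto
  have F: "F xs = f (G a b c xs)" if "xs \<in> lists I" "xs \<noteq> []" for xs
    using FF that unfolding G_def by blast
  have inj: "inj_on f {a..b}" using fm by (rule strict_mono_on_imp_inj_on)
  have Gr: "G a b c xs \<in> {a..b}" for xs using G_range[OF \<open>a \<le> b\<close>] .
  have PA: "preassociative_on I F"
    unfolding preassociative_on_def
  proof (intro ballI impI)
    fix x y y' z assume xs: "x \<in> lists I" "y \<in> lists I" "y' \<in> lists I" "z \<in> lists I"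
      and eq: "F y = F y'"
    show "F (x @ y @ z) = F (x @ y' @ z)"
    proof (cases "y = [] \<or> y' = []")
      case True
      then have "y = y'" using std eq xs unfolding standard_on_def by metis
      then show ?thesis by simp
    next
      case False
      then have "f (G a b c y) = f (G a b c y')" using eq F xs by simp
      then have gy: "G a b c y = G a b c y'" using inj Gr by (meson inj_onD)
      have "G a b c (x @ y @ z) = G a b c (x @ y' @ z)"
        using False gy by (cases "x = []"; cases "z = []") (simp_all add: G_append ac)
      then show ?thesis using F xs False by simp
    qed
  qed
  have QRI: "unarily_quasi_range_idempotent_on I F"
    unfolding unarily_quasi_range_idempotent_on_def
  proof
    show "(\<lambda>x. F [x]) ` I \<subseteq> F ` (lists I - {[]})" by force
    show "F ` (lists I - {[]}) \<subseteq> (\<lambda>x. F [x]) ` I"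
    proof
      fix v assume "v \<in> F ` (lists I - {[]})"
      then obtain xs where xs: "xs \<in> lists I" "xs \<noteq> []" "v = F xs" by auto
      let ?t = "G a b c xs"
      have t: "?t \<in> I" using Gr sub by blast
      have "F [?t] = f ?t" using F[of "[?t]"] t by (simp add: G_single medab2[OF Gr])
      then have "v = F [?t]" using xs F by simp
      then show "v \<in> (\<lambda>x. F [x]) ` I" using t by blast
    qed
  qed
  have F1: "\<forall>x\<in>I. F [x] = f (med a x b)" using F G_single by simp
  have F2: "F [x, y] = f (med a (med (min x y) c (max x y)) b)" if "x \<in> I" "y \<in> I" for x y
    using F[of "[x,y]"] that by (simp add: G_pair)
  have cont: "continuous_on (I \<times> I) (\<lambda>(x, y). F [x, y])"
  proof -
    have k: "continuous_on (I \<times> I) (\<lambda>p. med a (med (min (fst p) (snd p)) c (max (fst p) (snd p))) b)"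
      unfolding med_def by (intro continuous_intros)
    have "continuous_on (I \<times> I) (\<lambda>p. f (med a (med (min (fst p) (snd p)) c (max (fst p) (snd p))) b))"
      by (rule continuous_on_compose2[OF fc k]) (intro image_subsetI medab[OF \<open>a \<le> b\<close>])
    then show ?thesis
      by (rule continuous_on_cong[THEN iffD1, rotated 2]) (auto simp: F2)
  qed
  have sym: "\<forall>x\<in>I. \<forall>y\<in>I. F [x, y] = F [y, x]"
    using F2 by (simp add: min.commute max.commute)
  have fmono: "f u \<le> f v" if "u \<in> {a..b}" "v \<in> {a..b}" "u \<le> v" for u v
    using strict_mono_on_less_eq[OF fm that(1,2)] that(3) by simp
  have mono: "\<forall>x\<in>I. \<forall>x'\<in>I. \<forall>y\<in>I. x \<le> x' \<longrightarrow> F [x, y] \<le> F [x', y] \<and> F [y, x] \<le> F [y, x']"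
  proof (intro ballI impI)
    fix x x' y assume h: "x \<in> I" "x' \<in> I" "y \<in> I" "x \<le> x'"
    have "F [x, y] \<le> F [x', y]" unfolding F2[OF h(1,3)] F2[OF h(2,3)]
      by (rule fmono[OF medab[OF \<open>a \<le> b\<close>] medab[OF \<open>a \<le> b\<close>] mono1[OF \<open>a \<le> b\<close> h(4)]])
    moreover have "F [y, x] = F [x, y]" "F [y, x'] = F [x', y]" using sym h by auto
    ultimately show "F [x, y] \<le> F [x', y] \<and> F [y, x] \<le> F [y, x']" by simp
  qed
  have diag: "\<forall>x\<in>I. F [x, x] = F [x]" using F2 F1 by (simp add: medxx)
  show ?thesis using PA QRI fc fm F1 cont sym mono diag by blast
qed

lemma forward:
  fixes I :: "real set" and a b :: real and F :: "real list \<Rightarrow> real"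
  assumes ab: "a \<le> b" and sub: "{a..b} \<subseteq> I"
    and PA: "preassociative_on I F" and QRI: "unarily_quasi_range_idempotent_on I F"
    and fc: "continuous_on {a..b} f" and fm: "strict_mono_on {a..b} f"
    and F1: "\<forall>x\<in>I. F [x] = f (med a x b)"
    and cont: "continuous_on (I \<times> I) (\<lambda>(x, y). F [x, y])"
    and sym: "\<forall>x\<in>I. \<forall>y\<in>I. F [x, y] = F [y, x]"
    and mono: "\<forall>x\<in>I. \<forall>x'\<in>I. \<forall>y\<in>I. x \<le> x' \<longrightarrow> F [x, y] \<le> F [x', y] \<and> F [y, x] \<le> F [y, x']"
    and diag: "\<forall>x\<in>I. F [x, x] = F [x]"
  shows "\<exists>c\<in>{a..b}. \<exists>f. continuous_on {a..b} f \<and> strict_mono_on {a..b} f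
            \<and> (\<forall>xs\<in>lists I. xs \<noteq> [] \<longrightarrow>
                 F xs = f (med a (med (Min (set xs)) c (Max (set xs))) b))"
proof -
  have inj: "inj_on f {a..b}" using fm by (rule strict_mono_on_imp_inj_on)
  have injD: "u = v" if "f u = f v" "u \<in> {a..b}" "v \<in> {a..b}" for u v
    using inj that by (meson inj_onD)
  have leD: "u \<le> v" if "f u \<le> f v" "u \<in> {a..b}" "v \<in> {a..b}" for u v
    using strict_mono_on_less_eq[OF fm that(2,3)] that(1) by simp
  have fle: "f u \<le> f v" if "u \<le> v" "u \<in> {a..b}" "v \<in> {a..b}" for u v
    using strict_mono_on_less_eq[OF fm that(2,3)] that(1) by simp
  have Fab: "F [x] = f x" if "x \<in> {a..b}" for x
    using F1 sub that medab2[OF that] by auto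
  have PAe: "F (x @ y @ z) = F (x @ y' @ z)" if "x \<in> lists I" "y \<in> lists I" "y' \<in> lists I" "z \<in> lists I" "F y = F y'" for x y y' z
    using PA that unfolding preassociative_on_def by blast
  have ex: "\<exists>t. t \<in> {a..b} \<and> F [p, q] = f t" if "p \<in> I" "q \<in> I" for p q
  proof -
    have "F [p, q] \<in> F ` (lists I - {[]})" using that by auto
    then have "F [p, q] \<in> (\<lambda>x. F [x]) ` I" using QRI unfolding unarily_quasi_range_idempotent_on_def by simp
    then obtain x where "x \<in> I" "F [p, q] = F [x]" by auto
    then show ?thesis using F1 medab[OF ab] by auto
  qed
  define H where "H p q = (SOME t. t \<in> {a..b} \<and> F [p, q] = f t)" for p q
  have Hp: "H p q \<in> {a..b} \<and> F [p, q] = f (H p q)" if "p \<in> I" "q \<in> I" for p q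
    unfolding H_def using someI_ex[OF ex[OF that]] .
  have HI: "H p q \<in> {a..b}" if "p \<in> {a..b}" "q \<in> {a..b}" for p q using Hp that sub by blast
  have HF: "F [p, q] = f (H p q)" if "p \<in> {a..b}" "q \<in> {a..b}" for p q using Hp that sub by blast
  have idem: "H p p = p" if "p \<in> {a..b}" for p
  proof -
    have "p \<in> I" using sub that by auto
    then have "f (H p p) = f p" using HF[OF that that] diag Fab[OF that] by simp
    then show ?thesis using injD HI[OF that that] that by blast
  qed
  have mono1: "H p q \<le> H p' q" if "p \<le> p'" "p \<in> {a..b}" "p' \<in> {a..b}" "q \<in> {a..b}" for p p' q
  proof -
    have "p \<in> I" "p' \<in> I" "q \<in> I" using that sub by auto
    then have "F [p, q] \<le> F [p', q]" using mono that(1) by blast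
    then have "f (H p q) \<le> f (H p' q)" using HF[OF that(2,4)] HF[OF that(3,4)] by simp
    then show ?thesis using leD HI that by blast
  qed
  have mono2: "H q p \<le> H q p'" if "p \<le> p'" "p \<in> {a..b}" "p' \<in> {a..b}" "q \<in> {a..b}" for p p' q
  proof -
    have "p \<in> I" "p' \<in> I" "q \<in> I" using that sub by auto
    then have "F [q, p] \<le> F [q, p']" using mono that(1) by blast
    then have "f (H q p) \<le> f (H q p')" using HF[OF that(4,2)] HF[OF that(4,3)] by simp
    then show ?thesis using leD HI that by blast
  qed
  have Hsym: "H p q = H q p" if "p \<in> {a..b}" "q \<in> {a..b}" for p q
  proof -
    have "p \<in> I" "q \<in> I" using that sub by auto
    then have "F [p, q] = F [q, p]" using sym by blast
    then have "f (H p q) = f (H q p)" using HF[OF that] HF[OF that(2,1)] by simp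
    then show ?thesis using injD HI that by blast
  qed
  have assoc: "H (H p q) r = H p (H q r)" if "p \<in> {a..b}" "q \<in> {a..b}" "r \<in> {a..b}" for p q r
  proof -
    have l: "\<And>u. u \<in> {a..b} \<Longrightarrow> [u] \<in> lists I" using sub by auto
    have pq: "H p q \<in> {a..b}" "H q r \<in> {a..b}" using HI that by auto
    have e1: "F [p, q] = F [H p q]" using HF[OF that(1,2)] Fab[OF pq(1)] by simp
    have e2: "F [q, r] = F [H q r]" using HF[OF that(2,3)] Fab[OF pq(2)] by simp
    have "F ([] @ [p, q] @ [r]) = F ([] @ [H p q] @ [r])"
      by (rule PAe[OF _ _ _ _ e1]) (use that sub pq in auto)
    moreover have "F ([p] @ [q, r] @ []) = F ([p] @ [H q r] @ [])"
      by (rule PAe[OF _ _ _ _ e2]) (use that sub pq in auto)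
    ultimately have "F [H p q, r] = F [p, H q r]" by simp
    then have "f (H (H p q) r) = f (H p (H q r))" using HF[OF pq(1) that(3)] HF[OF that(1) pq(2)] by simp
    then show ?thesis using injD HI pq that by blast
  qed
  define c where "c = H a b"
  have abI: "a \<in> {a..b}" "b \<in> {a..b}" using ab by auto
  have c: "c \<in> {a..b}" unfolding c_def using HI abI by blast
  have contl: "continuous_on {a..b} (\<lambda>t. F [a, t])"
  proof -
    have c1: "continuous_on {a..b} (\<lambda>t. (a::real, t))" by (intro continuous_intros)
    have c2: "(\<lambda>t. (a, t)) ` {a..b} \<subseteq> I \<times> I" using sub abI by auto
    show ?thesis using continuous_on_compose2[OF cont c1 c2] by simp
  qed
  have contr: "continuous_on {a..b} (\<lambda>t. F [t, b])"
  proof -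
    have c1: "continuous_on {a..b} (\<lambda>t. (t, b::real))" by (intro continuous_intros)
    have c2: "(\<lambda>t. (t, b)) ` {a..b} \<subseteq> I \<times> I" using sub abI by auto
    show ?thesis using continuous_on_compose2[OF cont c1 c2] by simp
  qed
  have left: "H a p = p" if "p \<in> {a..c}" for p
  proof -
    have p: "p \<in> {a..b}" using that c by auto
    have "a \<in> I" using sub abI by auto
    then have "F [a, a] = f a" using diag Fab[OF abI(1)] by simp
    then have "F [a, a] \<le> f p" using fle[of a p] abI p by auto
    moreover have "f p \<le> F [a, b]" using HF[OF abI] c_def fle[of p c] that c p by auto
    ultimately obtain t where t: "a \<le> t" "t \<le> b" "F [a, t] = f p"
      using IVT'[of "\<lambda>t. F [a, t]" a "f p" b, OF _ _ ab contl] by auto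
    then have tI: "t \<in> {a..b}" by auto
    have "f (H a t) = f p" using HF[OF abI(1) tI] t(3) by simp
    then have "H a t = p" using injD HI[OF abI(1) tI] p by blast
    then show ?thesis using assoc[OF abI(1) abI(1) tI] idem[OF abI(1)] by simp
  qed
  have right: "H p b = p" if "p \<in> {c..b}" for p
  proof -
    have p: "p \<in> {a..b}" using that c by auto
    have "F [a, b] \<le> f p" using HF[OF abI] c_def fle[of c p] that c p by auto
    moreover have "F [b, b] = f b" using diag Fab[OF abI(2)] sub abI by auto
    moreover have "f p \<le> f b" using fle[of p b] abI p by auto
    ultimately obtain t where t: "a \<le> t" "t \<le> b" "F [t, b] = f p"
      using IVT'[of "\<lambda>t. F [t, b]" a "f p" b, OF _ _ ab contr] by auto
    then have tI: "t \<in> {a..b}" by auto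
    have "f (H t b) = f p" using HF[OF tI abI(2)] t(3) by simp
    then have "H t b = p" using injD HI[OF tI abI(2)] p by blast
    then show ?thesis using assoc[OF tI abI(2) abI(2)] idem[OF abI(2)] by simp
  qed
  have Hmed_le: "H p q = med p c q" if "p \<le> q" "p \<in> {a..b}" "q \<in> {a..b}" for p q
  proof -
    consider "q \<le> c" | "c \<le> p" | "p \<le> c" "c \<le> q" by linarith
    then show ?thesis
    proof cases
      case 1
      have "H a q = q" using left 1 that by auto
      moreover have "H a q \<le> H p q" using mono1[of a p q] that abI by auto
      moreover have "H p q \<le> H q q" using mono1[of p q q] that by auto
      ultimately have "H p q = q" using idem that by auto
      then show ?thesis using 1 that unfolding med_def by auto
    next
      case 2
      have "H p b = p" using right 2 that by auto
      moreover have "H p q \<le> H p b" using mono2[of q b p] that abI by auto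
      moreover have "H p p \<le> H p q" using mono2[of p q p] that by auto
      ultimately have "H p q = p" using idem that by auto
      then show ?thesis using 2 that unfolding med_def by auto
    next
      case 3
      have "H p q \<le> H p b" using mono2[of q b p] that abI by auto
      moreover have "H p b \<le> H c b" using mono1[of p c b] that abI c 3 by auto
      moreover have "H c b = c" using right c by auto
      moreover have "H a c \<le> H a q" using mono2[of c q a] that abI c 3 by auto
      moreover have "H a q \<le> H p q" using mono1[of a p q] that abI by auto
      moreover have "H a c = c" using left c by auto
      ultimately have "H p q = c" by linarith
      then show ?thesis using 3 that unfolding med_def by auto
    qed
  qed
  have Hmed: "H p q = med p c q" if "p \<in> {a..b}" "q \<in> {a..b}" for p q
  proof (cases "p \<le> q")
    case True then show ?thesis using Hmed_le that by auto
  next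
    case False then show ?thesis using Hmed_le[of q p] that Hsym medsym by auto
  qed
  have ac: "a \<le> c" "c \<le> b" using c by auto
  have main0: "xs \<in> lists I \<longrightarrow> xs \<noteq> [] \<longrightarrow> F xs = f (G a b c xs)" for xs
  proof (induction xs)
    case Nil then show ?case by simp
  next
    case (Cons x ys)
    show ?case
    proof (intro impI)
    assume "x # ys \<in> lists I"
    then have xI: "x \<in> I" and ysI: "ys \<in> lists I" by auto
    show "F (x # ys) = f (G a b c (x # ys))"
    proof (cases "ys = []")
      case True then show ?thesis using F1 xI by (simp add: G_single)
    next
      case False
      let ?t = "G a b c ys"
      let ?u = "med a x b"
      have t: "?t \<in> {a..b}" using G_range[OF ab] .
      have u: "?u \<in> {a..b}" using medab[OF ab] .
      have IH: "F ys = F [?t]" using Cons.IH ysI False Fab[OF t] by simp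
      have e2: "F [x] = F [?u]" using F1 xI Fab[OF u] by simp
      have "F ([x] @ ys @ []) = F ([x] @ [?t] @ [])"
        by (rule PAe[OF _ _ _ _ IH]) (use xI ysI t sub in auto)
      moreover have "F ([] @ [x] @ [?t]) = F ([] @ [?u] @ [?t])"
        by (rule PAe[OF _ _ _ _ e2]) (use xI u t sub in auto)
      ultimately have "F (x # ys) = f (H ?u ?t)" using HF[OF u t] by simp
      also have "H ?u ?t = med ?u c ?t" using Hmed[OF u t] .
      also have "\<dots> = G a b c ([x] @ ys)"
        using G_append[of "[x]" ys a c b] False ac by (simp add: G_single)
      finally show ?thesis by simp
    qed
    qed
  qed
  have main: "F xs = f (G a b c xs)" if "xs \<in> lists I" "xs \<noteq> []" for xs
    using main0 that by blast
  show ?thesis using c fc fm main unfolding G_def by blast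
qed

theorem corollary5p9:
  fixes I :: "real set" and a b :: real and F :: "real list \<Rightarrow> real"
  assumes "is_interval I" and "closed I"
    and "a \<le> b" and "{a..b} \<subseteq> I"
    and "standard_on I F"
  shows "((preassociative_on I F \<and> unarily_quasi_range_idempotent_on I F
          \<and> (\<exists>f. continuous_on {a..b} f \<and> strict_mono_on {a..b} f
                 \<and> (\<forall>x\<in>I. F [x] = f (med a x b)))
          \<and> continuous_on (I \<times> I) (\<lambda>(x, y). F [x, y])
          \<and> (\<forall>x\<in>I. \<forall>y\<in>I. F [x, y] = F [y, x])
          \<and> (\<forall>x\<in>I. \<forall>x'\<in>I. \<forall>y\<in>I. x \<le> x' \<longrightarrow> F [x, y] \<le> F [x', y] \<and> F [y, x] \<le> F [y, x'])
          \<and> (\<forall>x\<in>I. F [x, x] = F [x]))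
         \<longleftrightarrow>
         (\<exists>c\<in>{a..b}. \<exists>f. continuous_on {a..b} f \<and> strict_mono_on {a..b} f
            \<and> (\<forall>xs\<in>lists I. xs \<noteq> [] \<longrightarrow>
                 F xs = f (med a (med (Min (set xs)) c (Max (set xs))) b))))
     \<and> (\<forall>c\<in>{a..b}. \<forall>f. continuous_on {a..b} f \<and> strict_mono_on {a..b} f
            \<and> (\<forall>xs\<in>lists I. xs \<noteq> [] \<longrightarrow>
                 F xs = f (med a (med (Min (set xs)) c (Max (set xs))) b))
          \<longrightarrow> (\<forall>x\<in>{a..b}. f x = F [x]))"
proof -
  have fin: "\<forall>c\<in>{a..b}. \<forall>f. continuous_on {a..b} f \<and> strict_mono_on {a..b} f
            \<and> (\<forall>xs\<in>lists I. xs \<noteq> [] \<longrightarrow>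
                 F xs = f (med a (med (Min (set xs)) c (Max (set xs))) b))
          \<longrightarrow> (\<forall>x\<in>{a..b}. f x = F [x])"
  proof (intro ballI allI impI)
    fix c f x assume h: "continuous_on {a..b} f \<and> strict_mono_on {a..b} f
            \<and> (\<forall>xs\<in>lists I. xs \<noteq> [] \<longrightarrow>
                 F xs = f (med a (med (Min (set xs)) c (Max (set xs))) b))" and x: "x \<in> {a..b}"
    then have "F [x] = f (med a (med x c x) b)" using assms(4) by auto
    then show "f x = F [x]" using x by (simp add: medxx medab2)
  qed
  show ?thesis
    using fin forward[OF assms(3,4)] backward[OF assms(3,4,5)] by blast
qed

end
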